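(* Let $0<\alpha\leqslant1$. Define functions on $[1,\infty)$ recursively by $f_0(x)\equiv1$ and, for $k\geqslant0$, $$f_{k+1}(x)=\max\{y\in(0,1]:\ F_k(y)=\alpha x\},\qquad F_k(y)=\frac1y-y-\frac{1-\alpha}{f_k(1/y)}+f_k(1/y)\quad(0<y\leqslant1).$$ Then the sequence $\{f_k\}$ is well defined and: (a) for every $k\geqslant1$, $f_k$ is a strictly decreasing smooth function on $[1,\infty)$ with $f_k(1)=1$, $\lim_{x\to\infty}f_k(x)=0$, and $f_k(x)>1/x$ for all $x>1$; (b) for every $k\geqslant0$, $F_k$ is a strictly decreasing smooth function on $(0,1]$ with $\lim_{y\to0^+}F_k(y)=\infty$ and $F_k(1)=\alpha$; (c) for all $k\geqslant0$ and $x>1$, $f_{k+1}(x)<f_k(x)$; (d) $\{f_k\}$ converges pointwise on $[1,\infty)$ to $$f_\infty(x)=\max\left\{\frac1x,\ \frac12\left(\alpha(2-x)+\sqrt{\alpha^2(2-x)^2+4(1-\alpha)}\right)\right\}.$$ *)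

theory Defs
  imports "HOL-Analysis.Analysis"
begin

text \<open>For S = [1,\<infinity>) this uses one-sided derivatives at the endpoint.\<close>
definition smooth_on :: "real set \<Rightarrow> (real \<Rightarrow> real) \<Rightarrow> bool" where
  "smooth_on S f \<longleftrightarrow> (\<exists>D :: nat \<Rightarrow> real \<Rightarrow> real. D 0 = f \<and>
      (\<forall>n. \<forall>x\<in>S. (D n has_real_derivative D (Suc n) x) (at x within S)))"

primrec fseq :: "real \<Rightarrow> nat \<Rightarrow> real \<Rightarrow> real" where
  "fseq a 0 = (\<lambda>x. 1)"
| "fseq a (Suc k) = (\<lambda>x. GREATEST y. 0 < y \<and> y \<le> 1 \<and>
      1 / y - y - (1 - a) / fseq a k (1 / y) + fseq a k (1 / y) = a * x)"

definition Fseq :: "real \<Rightarrow> nat \<Rightarrow> real \<Rightarrow> real" where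
  "Fseq a k y = 1 / y - y - (1 - a) / fseq a k (1 / y) + fseq a k (1 / y)"

lemma fseq_Suc: "fseq a (Suc k) x = (GREATEST y. 0 < y \<and> y \<le> 1 \<and> Fseq a k y = a * x)"
  by (simp add: Fseq_def)

definition finf :: "real \<Rightarrow> real \<Rightarrow> real" where
  "finf a x = max (1 / x) ((a * (2 - x) + sqrt (a\<^sup>2 * (2 - x)\<^sup>2 + 4 * (1 - a))) / 2)"

end

theory Submission
  imports Defs
begin


lemma smooth_coinduct:
  assumes "X f"
    and step: "\<And>g. X g \<Longrightarrow> \<exists>g'. (\<forall>x\<in>S. (g has_real_derivative g' x) (at x within S)) \<and> X g'"
  shows "smooth_on S f"
proof -
  have "\<forall>g. \<exists>g'. X g \<longrightarrow> (\<forall>x\<in>S. (g has_real_derivative g' x) (at x within S)) \<and> X g'"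
    using step by blast
  then obtain st where st: "\<And>g. X g \<Longrightarrow> (\<forall>x\<in>S. (g has_real_derivative st g x) (at x within S)) \<and> X (st g)"
    by metis
  define D where "D n = (st ^^ n) f" for n
  have X: "X (D n)" for n
    by (induction n) (auto simp: D_def assms(1) st)
  have "D (Suc n) = st (D n)" for n by (simp add: D_def)
  then show ?thesis unfolding smooth_on_def
    using X st by (intro exI[of _ D]) (auto simp: D_def)
qed

lemma smooth_onD:
  assumes "smooth_on S f"
  shows "\<exists>f'. (\<forall>x\<in>S. (f has_real_derivative f' x) (at x within S)) \<and> smooth_on S f'"
proof -
  obtain D where D: "D 0 = f" "\<forall>n. \<forall>x\<in>S. (D n has_real_derivative D (Suc n) x) (at x within S)"
    using assms unfolding smooth_on_def by blast
  have "smooth_on S (D 1)" unfolding smooth_on_def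
    by (rule exI[of _ "\<lambda>n. D (Suc n)"]) (use D in auto)
  then show ?thesis using D by (intro exI[of _ "D 1"]) auto
qed

lemma smooth_on_continuous:
  assumes "smooth_on S f" shows "continuous_on S f"
proof -
  obtain f' where "\<forall>x\<in>S. (f has_real_derivative f' x) (at x within S)"
    using smooth_onD[OF assms] by blast
  then show ?thesis
    unfolding continuous_on_eq_continuous_within using DERIV_continuous by blast
qed

lemma smooth_on_cong:
  assumes "smooth_on S f" and "\<And>x. x \<in> S \<Longrightarrow> f x = g x"
  shows "smooth_on S g"
proof (rule smooth_coinduct[where X="\<lambda>h. h = g \<or> smooth_on S h"])
  fix h assume "h = g \<or> smooth_on S h"
  then show "\<exists>h'. (\<forall>x\<in>S. (h has_real_derivative h' x) (at x within S)) \<and> (h' = g \<or> smooth_on S h')"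
  proof
    assume hg: "h = g"
    obtain f' where f': "\<forall>x\<in>S. (f has_real_derivative f' x) (at x within S)" "smooth_on S f'"
      using smooth_onD[OF assms(1)] by blast
    have "\<forall>x\<in>S. (g has_real_derivative f' x) (at x within S)"
      using f'(1) assms(2) by (auto intro: has_field_derivative_transform_within[where d=1])
    then show ?thesis using f'(2) hg by blast
  next
    assume "smooth_on S h" then show ?thesis using smooth_onD by blast
  qed
qed simp

inductive alg :: "((real \<Rightarrow> real) \<Rightarrow> bool) \<Rightarrow> (real \<Rightarrow> real) \<Rightarrow> bool" for B where
  alg_base: "B f \<Longrightarrow> alg B f"
| alg_const: "alg B (\<lambda>x. c)"
| alg_add: "alg B f \<Longrightarrow> alg B g \<Longrightarrow> alg B (\<lambda>x. f x + g x)"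
| alg_mult: "alg B f \<Longrightarrow> alg B g \<Longrightarrow> alg B (\<lambda>x. f x * g x)"

lemma alg_smooth:
  assumes base: "\<And>f. B f \<Longrightarrow> \<exists>f'. (\<forall>x\<in>S. (f has_real_derivative f' x) (at x within S)) \<and> alg B f'"
    and "alg B f"
  shows "smooth_on S f"
proof -
  have step: "\<exists>f'. (\<forall>x\<in>S. (f has_real_derivative f' x) (at x within S)) \<and> alg B f'" if "alg B f" for f
    using that
  proof induction
    case (alg_base f) then show ?case using base by blast
  next
    case (alg_const c) then show ?case
      by (intro exI[of _ "\<lambda>x. 0"]) (auto intro: alg.alg_const)
  next
    case (alg_add f g)
    then obtain f' g' where "\<forall>x\<in>S. (f has_real_derivative f' x) (at x within S)" "alg B f'"
      "\<forall>x\<in>S. (g has_real_derivative g' x) (at x within S)" "alg B g'" by blast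
    then show ?case
      by (intro exI[of _ "\<lambda>x. f' x + g' x"]) (auto intro: alg.alg_add DERIV_add)
  next
    case (alg_mult f g)
    then obtain f' g' where "\<forall>x\<in>S. (f has_real_derivative f' x) (at x within S)" "alg B f'"
      "\<forall>x\<in>S. (g has_real_derivative g' x) (at x within S)" "alg B g'" by blast
    then show ?case
      by (intro exI[of _ "\<lambda>x. f' x * g x + g' x * f x"])
         (auto intro!: alg.alg_add alg.alg_mult DERIV_mult alg_mult.hyps)
  qed
  show ?thesis by (rule smooth_coinduct[where X="alg B"]) (use assms(2) step in auto)
qed

definition B1 :: "real set \<Rightarrow> (real \<Rightarrow> real) \<Rightarrow> bool" where
  "B1 S f \<longleftrightarrow> smooth_on S f \<or> (\<exists>h. smooth_on S h \<and> (\<forall>x\<in>S. h x \<noteq> 0) \<and> f = (\<lambda>x. 1 / h x))"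

lemma alg_B1_smooth: "alg (B1 S) f \<Longrightarrow> smooth_on S f"
proof (rule alg_smooth)
  fix f assume "B1 S f"
  then consider "smooth_on S f" | h where "smooth_on S h" "\<forall>x\<in>S. h x \<noteq> 0" "f = (\<lambda>x. 1 / h x)"
    unfolding B1_def by blast
  then show "\<exists>f'. (\<forall>x\<in>S. (f has_real_derivative f' x) (at x within S)) \<and> alg (B1 S) f'"
  proof cases
    case 1 then show ?thesis using smooth_onD by (metis B1_def alg_base)
  next
    case 2
    obtain h' where h': "\<forall>x\<in>S. (h has_real_derivative h' x) (at x within S)" "smooth_on S h'"
      using smooth_onD[OF 2(1)] by blast
    have "alg (B1 S) (\<lambda>x. 1 / h x)" using 2 by (auto simp: B1_def intro!: alg_base)
    then have A: "alg (B1 S) (\<lambda>x. (-1) * h' x * (1 / h x) * (1 / h x))"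
      using h'(2) by (intro alg_mult alg_const) (auto simp: B1_def intro!: alg_base alg_mult alg_const)
    have D: "\<forall>x\<in>S. (f has_real_derivative (-1) * h' x * (1 / h x) * (1 / h x)) (at x within S)"
    proof
      fix x assume x: "x \<in> S"
      have "((\<lambda>x. 1 / h x) has_real_derivative (0 * h x - 1 * h' x) / (h x * h x)) (at x within S)"
        using h'(1) x 2(2) by (intro DERIV_divide) auto
      then show "(f has_real_derivative (-1) * h' x * (1 / h x) * (1 / h x)) (at x within S)"
        using 2(3) by (simp add: field_simps)
    qed
    show ?thesis by (rule exI[where x="\<lambda>x. (-1) * h' x * (1 / h x) * (1 / h x)"], rule conjI[OF D A])
  qed
qed

lemma smooth_add: "smooth_on S f \<Longrightarrow> smooth_on S g \<Longrightarrow> smooth_on S (\<lambda>x. f x + g x)"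
  by (rule alg_B1_smooth, rule alg_add; rule alg_base) (auto simp: B1_def)

lemma smooth_mult: "smooth_on S f \<Longrightarrow> smooth_on S g \<Longrightarrow> smooth_on S (\<lambda>x. f x * g x)"
  by (rule alg_B1_smooth, rule alg_mult; rule alg_base) (auto simp: B1_def)

lemma smooth_const: "smooth_on S (\<lambda>x. c)"
  by (rule alg_B1_smooth) (auto intro!: alg_const)

lemma smooth_recip: "smooth_on S h \<Longrightarrow> (\<And>x. x \<in> S \<Longrightarrow> h x \<noteq> 0) \<Longrightarrow> smooth_on S (\<lambda>x. 1 / h x)"
  by (rule alg_B1_smooth, rule alg_base, unfold B1_def, intro disjI2 exI[of _ h]) auto

lemma smooth_id: "smooth_on S (\<lambda>x. x)"
proof (rule smooth_coinduct[where X="\<lambda>h. h = (\<lambda>x. x) \<or> (\<exists>c::real. h = (\<lambda>x. c))"])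
  fix g :: "real \<Rightarrow> real" assume "g = (\<lambda>x. x) \<or> (\<exists>c::real. g = (\<lambda>x. c))"
  then show "\<exists>g'. (\<forall>x\<in>S. (g has_real_derivative g' x) (at x within S)) \<and> (g' = (\<lambda>x. x) \<or> (\<exists>c::real. g' = (\<lambda>x. c)))"
    by (auto intro!: derivative_eq_intros)
qed simp

definition B2 :: "real set \<Rightarrow> real set \<Rightarrow> (real \<Rightarrow> real) \<Rightarrow> (real \<Rightarrow> real) \<Rightarrow> bool" where
  "B2 S T u f \<longleftrightarrow> smooth_on S f \<or> (\<exists>\<phi>. smooth_on T \<phi> \<and> f = (\<lambda>x. \<phi> (u x)))"

lemma smooth_comp_general:
  assumes uT: "\<And>x. x \<in> S \<Longrightarrow> u x \<in> T"
    and du: "\<forall>x\<in>S. (u has_real_derivative u' x) (at x within S)" and au: "alg (B2 S T u) u'"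
    and phi: "smooth_on T \<phi>"
  shows "smooth_on S (\<lambda>x. \<phi> (u x))"
proof (rule alg_smooth[where B="B2 S T u"])
  show "alg (B2 S T u) (\<lambda>x. \<phi> (u x))" using phi by (auto simp: B2_def intro!: alg_base)
next
  fix f assume "B2 S T u f"
  then consider "smooth_on S f" | \<psi> where "smooth_on T \<psi>" "f = (\<lambda>x. \<psi> (u x))"
    unfolding B2_def by blast
  then show "\<exists>f'. (\<forall>x\<in>S. (f has_real_derivative f' x) (at x within S)) \<and> alg (B2 S T u) f'"
  proof cases
    case 1 then show ?thesis using smooth_onD by (metis B2_def alg_base)
  next
    case 2
    obtain \<psi>' where p: "\<forall>t\<in>T. (\<psi> has_real_derivative \<psi>' t) (at t within T)" "smooth_on T \<psi>'"
      using smooth_onD[OF 2(1)] by blast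
    have A: "alg (B2 S T u) (\<lambda>x. \<psi>' (u x) * u' x)"
      by (rule alg_mult[OF alg_base au]) (unfold B2_def, rule disjI2, rule exI[of _ \<psi>'], simp add: p(2))
    have D: "\<forall>x\<in>S. (f has_real_derivative \<psi>' (u x) * u' x) (at x within S)"
    proof
      fix x assume x: "x \<in> S"
      have "(\<psi> has_real_derivative \<psi>' (u x)) (at (u x) within u ` S)"
        using p(1) uT x by (auto intro: DERIV_subset)
      from DERIV_image_chain[OF this] du x
      show "(f has_real_derivative \<psi>' (u x) * u' x) (at x within S)"
        using 2(2) by (simp add: o_def)
    qed
    show ?thesis by (rule exI[where x="\<lambda>x. \<psi>' (u x) * u' x"], rule conjI[OF D A])
  qed
qed

lemma smooth_comp:
  assumes "smooth_on S u" "\<And>x. x \<in> S \<Longrightarrow> u x \<in> T" "smooth_on T \<phi>"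
  shows "smooth_on S (\<lambda>x. \<phi> (u x))"
proof -
  obtain u' where u': "\<forall>x\<in>S. (u has_real_derivative u' x) (at x within S)" "smooth_on S u'"
    using smooth_onD[OF assms(1)] by blast
  have "alg (B2 S T u) u'" by (rule alg_base) (simp add: B2_def u'(2))
  from smooth_comp_general[OF assms(2) u'(1) this assms(3)] show ?thesis .
qed

lemma DERIV_inverse_within:
  fixes G u :: "real \<Rightarrow> real"
  assumes G: "(G has_real_derivative D) (at (u y) within T)" and D: "D \<noteq> 0"
    and uT: "\<And>z. z \<in> S \<Longrightarrow> u z \<in> T" and Gu: "\<And>z. z \<in> S \<Longrightarrow> G (u z) = z"
    and y: "y \<in> S" and cont: "continuous (at y within S) u"
  shows "(u has_real_derivative inverse D) (at y within S)"
proof -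
  have q: "((\<lambda>w. (G w - G (u y)) / (w - u y)) \<longlongrightarrow> D) (at (u y) within T)"
    using G by (simp add: has_field_derivative_iff)
  have ev: "eventually (\<lambda>z. u z \<in> T \<and> u z \<noteq> u y) (at y within S)"
    unfolding eventually_at_filter
    proof (rule always_eventually, intro allI impI conjI)
    fix z assume "z \<noteq> y" "z \<in> S"
    then show "u z \<in> T" using uT by blast
    show "u z \<noteq> u y" using Gu[OF \<open>z \<in> S\<close>] Gu[OF y] \<open>z \<noteq> y\<close> by metis
  qed
  have fl: "filterlim u (at (u y) within T) (at y within S)"
    unfolding filterlim_at by (rule conjI[OF ev cont[unfolded continuous_within]])
  have "((\<lambda>z. (G (u z) - G (u y)) / (u z - u y)) \<longlongrightarrow> D) (at y within S)"
    using filterlim_compose[OF q fl] .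
  then have "((\<lambda>z. inverse ((G (u z) - G (u y)) / (u z - u y))) \<longlongrightarrow> inverse D) (at y within S)"
    using D by (intro tendsto_inverse) auto
  moreover have "eventually (\<lambda>z. inverse ((G (u z) - G (u y)) / (u z - u y)) = (u z - u y) / (z - y)) (at y within S)"
    unfolding eventually_at_filter
    proof (rule always_eventually, intro allI impI)
    fix z assume "z \<noteq> y" "z \<in> S"
    then show "inverse ((G (u z) - G (u y)) / (u z - u y)) = (u z - u y) / (z - y)"
      using Gu[OF \<open>z \<in> S\<close>] Gu[OF y] by (simp add: inverse_divide)
  qed
  ultimately have "((\<lambda>z. (u z - u y) / (z - y)) \<longlongrightarrow> inverse D) (at y within S)"
    by (rule Lim_transform_eventually)
  then show ?thesis by (simp add: has_field_derivative_iff)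
qed

lemma smooth_inverse:
  fixes G u :: "real \<Rightarrow> real"
  assumes "smooth_on T G'" and dG: "\<And>t. t \<in> T \<Longrightarrow> (G has_real_derivative G' t) (at t within T)"
    and nz: "\<And>t. t \<in> T \<Longrightarrow> G' t \<noteq> 0"
    and uT: "\<And>z. z \<in> S \<Longrightarrow> u z \<in> T" and Gu: "\<And>z. z \<in> S \<Longrightarrow> G (u z) = z"
    and cont: "continuous_on S u"
  shows "smooth_on S u"
proof -
  have du: "\<forall>y\<in>S. (u has_real_derivative (\<lambda>t. 1 / G' t) (u y)) (at y within S)"
  proof
    fix y assume y: "y \<in> S"
    have "(u has_real_derivative inverse (G' (u y))) (at y within S)"
      by (rule DERIV_inverse_within[where G=G and T=T]) 
         (use dG nz uT Gu y cont in \<open>auto simp: continuous_on_eq_continuous_within\<close>)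
    then show "(u has_real_derivative (\<lambda>t. 1 / G' t) (u y)) (at y within S)"
      by (simp add: divide_inverse)
  qed
  have "smooth_on T (\<lambda>t. 1 / G' t)" using smooth_recip assms(1) nz by blast
  then have "alg (B2 S T u) (\<lambda>y. (\<lambda>t. 1 / G' t) (u y))"
    by (intro alg_base) (auto simp: B2_def)
  from smooth_comp_general[OF uT du this smooth_id[of T]]
  show ?thesis by simp
qed




definition gg :: "real \<Rightarrow> real \<Rightarrow> real" where "gg a t = t - (1 - a) / t"
definition GG :: "real \<Rightarrow> nat \<Rightarrow> real \<Rightarrow> real" where "GG a k t = t - 1 / t + gg a (fseq a k t)"
definition HH :: "real \<Rightarrow> nat \<Rightarrow> real \<Rightarrow> real" where "HH a k t = a * t + gg a (fseq a k t)"

lemma Fseq_GG: "Fseq a k y = GG a k (1 / y)"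
  by (simp add: Fseq_def GG_def gg_def)

lemma GG_HH: "GG a k t = (1 - a) * t - 1 / t + HH a k t"
  by (simp add: GG_def HH_def algebra_simps)

lemma gg_mono: "a \<le> 1 \<Longrightarrow> 0 < s \<Longrightarrow> s \<le> t \<Longrightarrow> gg a s \<le> gg a t"
  unfolding gg_def by (smt (verit) divide_left_mono mult_pos_pos)

lemma gg_strict: "a \<le> 1 \<Longrightarrow> 0 < s \<Longrightarrow> s < t \<Longrightarrow> gg a s < gg a t"
  unfolding gg_def by (smt (verit) divide_left_mono mult_pos_pos)

lemma gg_1: "gg a 1 = a" by (simp add: gg_def)

lemma mono_deriv_nonneg:
  assumes d: "(f has_real_derivative D) (at t within {1..})" and t: "1 \<le> t"
    and mono: "\<And>x y. 1 \<le> x \<Longrightarrow> x \<le> y \<Longrightarrow> f x \<le> f (y::real)"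
  shows "0 \<le> D"
proof -
  have lim: "((\<lambda>y. (f y - f t) / (y - t)) \<longlongrightarrow> D) (at t within {1..})"
    using d by (simp add: has_field_derivative_iff)
  have "at_right t \<le> at t within {1..}" by (rule at_le) (use t in auto)
  then have nb: "at t within {1..} \<noteq> bot"
    using trivial_limit_at_right_real[of t] by (metis bot.extremum_uniqueI)
  have ev: "eventually (\<lambda>y. 0 \<le> (f y - f t) / (y - t)) (at t within {1..})"
    unfolding eventually_at_filter
  proof (rule always_eventually, intro allI impI)
    fix y assume "y \<noteq> t" "y \<in> {1..}"
    then show "0 \<le> (f y - f t) / (y - t)"
      using mono[of t y] mono[of y t] t
      by (cases "y < t") (auto intro: divide_nonpos_neg divide_nonneg_pos)
  qed
  show ?thesis by (rule tendsto_lowerbound[OF lim ev nb])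
qed

lemma inv_cont:
  fixes G U :: "real \<Rightarrow> real"
  assumes contG: "continuous_on {1..} G" and mono: "\<And>s t. 1 \<le> s \<Longrightarrow> s < t \<Longrightarrow> G s < G t"
    and Gge: "\<And>t. 1 \<le> t \<Longrightarrow> 1 \<le> G t"
    and U: "\<And>y. 1 \<le> y \<Longrightarrow> 1 \<le> U y \<and> G (U y) = y"
  shows "continuous_on {1..} U"
proof -
  have inj: "s = t" if "1 \<le> s" "1 \<le> t" "G s = G t" for s t
    using mono[of s t] mono[of t s] that by (cases s t rule: linorder_cases) auto
  have UG: "U (G t) = t" if "1 \<le> t" for t
    using U[of "G t"] Gge[OF that] inj that by auto
  show ?thesis unfolding continuous_on_eq_continuous_within
  proof
    fix y :: real assume y: "y \<in> {1..}"
    define N where "N = U y + 1"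
    have "1 \<le> U y" using U y by auto
    then have N: "1 \<le> N" by (simp add: N_def)
    have yN: "y < G N" using mono[of "U y" N] U[of y] y by (auto simp: N_def)
    have c1: "continuous_on (G ` {1..N}) U"
      by (rule continuous_on_inv) (use contG UG in \<open>auto intro: continuous_on_subset\<close>)
    have sub: "{1..G N} \<subseteq> G ` {1..N}"
    proof
      fix z assume z: "z \<in> {1..G N}"
      have "U z \<le> N"
      proof (rule ccontr)
        assume "\<not> U z \<le> N"
        then have "G N < G (U z)" using mono[of N "U z"] N by auto
        then show False using U[of z] z by auto
      qed
      then show "z \<in> G ` {1..N}" using U[of z] z by (auto intro!: image_eqI[of _ _ "U z"])
    qed
    have "continuous (at y within {1..G N}) U"
      using continuous_on_subset[OF c1 sub] y yN
      unfolding continuous_on_eq_continuous_within by auto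
    moreover have "at y within {1..G N} = at y within {1..}"
      by (rule at_within_nhd[of _ "{..<G N}"]) (use yN in auto)
    ultimately show "continuous (at y within {1..}) U" by simp
  qed
qed

definition Inv :: "real \<Rightarrow> nat \<Rightarrow> bool" where
  "Inv a k \<longleftrightarrow> (\<forall>x\<ge>1. 0 < fseq a k x \<and> fseq a k x \<le> 1) \<and> fseq a k 1 = 1
     \<and> (\<forall>x>1. 1 / x < fseq a k x) \<and> smooth_on {1..} (fseq a k)
     \<and> (\<forall>x y. 1 \<le> x \<longrightarrow> x \<le> y \<longrightarrow> HH a k x \<le> HH a k y)"

lemma Inv_0: "0 < a \<Longrightarrow> Inv a 0"
  unfolding Inv_def HH_def by (auto simp: smooth_const gg_1)




context
  fixes a :: real and k :: nat
  assumes a0: "0 < a" and a1: "a \<le> 1" and I: "Inv a k"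
begin

lemma f_pos: "1 \<le> x \<Longrightarrow> 0 < fseq a k x" using I by (auto simp: Inv_def)
lemma f_le1: "1 \<le> x \<Longrightarrow> fseq a k x \<le> 1" using I by (auto simp: Inv_def)
lemma f_1: "fseq a k 1 = 1" using I by (auto simp: Inv_def)
lemma f_gt: "1 < x \<Longrightarrow> 1 / x < fseq a k x" using I by (auto simp: Inv_def)
lemma f_ge: "1 \<le> x \<Longrightarrow> 1 / x \<le> fseq a k x"
  using f_gt[of x] f_1 by (cases "x = 1") auto
lemma f_smooth: "smooth_on {1..} (fseq a k)" using I by (auto simp: Inv_def)
lemma HH_mono: "1 \<le> x \<Longrightarrow> x \<le> y \<Longrightarrow> HH a k x \<le> HH a k y" using I by (auto simp: Inv_def)

lemma GG_strict: "1 \<le> s \<Longrightarrow> s < t \<Longrightarrow> GG a k s < GG a k t"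
proof -
  assume st: "1 \<le> s" "s < t"
  have "HH a k s \<le> HH a k t" using HH_mono st by auto
  moreover have "1 / t < 1 / s" using st by (simp add: frac_less2)
  moreover have "(1 - a) * s \<le> (1 - a) * t" using st a1 by (simp add: mult_left_mono)
  ultimately show ?thesis unfolding GG_HH by linarith
qed

lemma GG_le_iff: "1 \<le> s \<Longrightarrow> 1 \<le> t \<Longrightarrow> GG a k s \<le> GG a k t \<longleftrightarrow> s \<le> t"
  using GG_strict[of s t] GG_strict[of t s] by (cases s t rule: linorder_cases) auto

lemma GG_inj: "1 \<le> s \<Longrightarrow> 1 \<le> t \<Longrightarrow> GG a k s = GG a k t \<Longrightarrow> s = t"
  using GG_le_iff[of s t] GG_le_iff[of t s] by auto

lemma GG_1: "GG a k 1 = a" by (simp add: GG_def f_1 gg_1)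

lemma GG_lower: "1 \<le> t \<Longrightarrow> a * t \<le> GG a k t"
proof -
  assume t: "1 \<le> t"
  have "gg a (1 / t) \<le> gg a (fseq a k t)" using gg_mono[OF a1, of "1/t"] f_ge t by auto
  then show ?thesis using t unfolding GG_def gg_def by (simp add: field_simps)
qed

lemma GG_lower_strict: "1 < t \<Longrightarrow> a * t < GG a k t"
proof -
  assume t: "1 < t"
  have "gg a (1 / t) < gg a (fseq a k t)" using gg_strict[OF a1, of "1/t"] f_gt t by auto
  then show ?thesis using t unfolding GG_def gg_def by (simp add: field_simps)
qed

lemma GG_upper: "1 \<le> t \<Longrightarrow> GG a k t \<le> t + a"
proof -
  assume t: "1 \<le> t"
  have "gg a (fseq a k t) \<le> gg a 1" using gg_mono[OF a1] f_pos f_le1 t by auto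
  moreover have "0 < 1 / t" using t by auto
  ultimately show ?thesis unfolding GG_def gg_1 by linarith
qed

lemma GG_smooth: "smooth_on {1..} (GG a k)"
proof -
  let ?f = "fseq a k"
  have r1: "smooth_on {1..} (\<lambda>t. 1 / t)" by (rule smooth_recip[OF smooth_id]) auto
  have r2: "smooth_on {1..} (\<lambda>t. 1 / ?f t)" by (rule smooth_recip[OF f_smooth]) (use f_pos in force)
  have "smooth_on {1..} (\<lambda>t. (t + (-1) * (1 / t)) + (?f t + (-(1 - a)) * (1 / ?f t)))"
    by (intro smooth_add smooth_mult smooth_const smooth_id r1 r2 f_smooth)
  then show ?thesis by (rule smooth_on_cong) (simp add: GG_def gg_def diff_divide_distrib)
qed

lemma GG_cont: "continuous_on {1..} (GG a k)"
  using smooth_on_continuous[OF GG_smooth] .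

lemma sol_exists: "1 \<le> x \<Longrightarrow> \<exists>u. 1 \<le> u \<and> u \<le> x \<and> GG a k u = a * x"
proof -
  assume x: "1 \<le> x"
  have "GG a k 1 \<le> a * x" using GG_1 x a0 by simp
  moreover have "a * x \<le> GG a k x" using GG_lower x by auto
  moreover have "continuous_on {1..x} (GG a k)" using GG_cont by (rule continuous_on_subset) auto
  ultimately show ?thesis using IVT'[of "GG a k" 1 "a * x" x] x by auto
qed

lemma fseq_Suc_eq:
  assumes x: "1 \<le> x" and u: "1 \<le> u" "GG a k u = a * x"
  shows "fseq a (Suc k) x = 1 / u"
  unfolding fseq_Suc
proof (rule Greatest_equality)
  show "0 < 1 / u \<and> 1 / u \<le> 1 \<and> Fseq a k (1 / u) = a * x"
    using u by (simp add: Fseq_GG)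
next
  fix y assume y: "0 < y \<and> y \<le> 1 \<and> Fseq a k y = a * x"
  then have "1 \<le> 1 / y" by simp
  moreover have "GG a k (1 / y) = GG a k u" using y u by (simp add: Fseq_GG)
  ultimately have "1 / y = u" using GG_inj u by blast
  then show "y \<le> 1 / u" using y by auto
qed

lemma welldef: "1 \<le> x \<Longrightarrow> \<exists>y. (0 < y \<and> y \<le> 1 \<and> Fseq a k y = a * x) \<and>
        (\<forall>z. 0 < z \<and> z \<le> 1 \<and> Fseq a k z = a * x \<longrightarrow> z \<le> y)"
proof -
  assume x: "1 \<le> x"
  obtain u where u: "1 \<le> u" "GG a k u = a * x" using sol_exists[OF x] by blast
  show ?thesis
  proof (intro exI[of _ "1 / u"] conjI allI impI)
    show "0 < 1 / u" "1 / u \<le> 1" "Fseq a k (1 / u) = a * x" using u by (auto simp: Fseq_GG)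
  next
    fix z assume z: "0 < z \<and> z \<le> 1 \<and> Fseq a k z = a * x"
    then have "1 \<le> 1 / z" by simp
    moreover have "GG a k (1 / z) = GG a k u" using z u by (simp add: Fseq_GG)
    ultimately have "1 / z = u" using GG_inj u by blast
    then show "z \<le> 1 / u" using z by auto
  qed
qed

definition U :: "real \<Rightarrow> real" where "U x = 1 / fseq a (Suc k) x"

lemma U_props: "1 \<le> x \<Longrightarrow> 1 \<le> U x \<and> U x \<le> x \<and> GG a k (U x) = a * x"
proof -
  assume x: "1 \<le> x"
  obtain u where u: "1 \<le> u" "u \<le> x" "GG a k u = a * x" using sol_exists[OF x] by blast
  have "U x = u" using fseq_Suc_eq[OF x u(1,3)] by (simp add: U_def)
  then show ?thesis using u by simp
qed

lemma fSuc_U: "1 \<le> x \<Longrightarrow> fseq a (Suc k) x = 1 / U x"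
  using U_props[of x] by (simp add: U_def)

lemma U_strict: "1 \<le> x \<Longrightarrow> x < y \<Longrightarrow> U x < U y"
proof -
  assume xy: "1 \<le> x" "x < y"
  have "GG a k (U x) < GG a k (U y)" using U_props[of x] U_props[of y] xy a0 by auto
  then show ?thesis using GG_le_iff U_props[of x] U_props[of y] xy by (meson linorder_not_le order_trans less_imp_le)
qed

lemma U_gt1: "1 < x \<Longrightarrow> 1 < U x"
proof -
  assume x: "1 < x"
  have "GG a k 1 < GG a k (U x)" using U_props[of x] x a0 GG_1 by auto
  then show ?thesis using GG_le_iff[of "U x" 1] U_props[of x] x by auto
qed

lemma U_lt: "1 < x \<Longrightarrow> U x < x"
proof -
  assume x: "1 < x"
  have "GG a k (U x) < GG a k x" using U_props[of x] x GG_lower_strict[of x] by auto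
  then show ?thesis using GG_le_iff[of x "U x"] U_props[of x] x by auto
qed

lemma U_1: "U 1 = 1" using U_props[of 1] by auto

lemma HH_Suc: "1 \<le> x \<Longrightarrow> HH a (Suc k) x = HH a k (U x)"
proof -
  assume x: "1 \<le> x"
  have u: "1 \<le> U x" "GG a k (U x) = a * x" using U_props[OF x] by auto
  show ?thesis using u unfolding HH_def fSuc_U[OF x] GG_def gg_def
    by (simp add: field_simps)
qed

lemma U_cont: "continuous_on {1..} U"
proof (rule inv_cont[where G="\<lambda>t. GG a k t / a"])
  show "continuous_on {1..} (\<lambda>t. GG a k t / a)"
    using GG_cont a0 by (intro continuous_intros) auto
  show "GG a k s / a < GG a k t / a" if "1 \<le> s" "s < t" for s t
    using GG_strict[OF that] a0 by (simp add: divide_strict_right_mono)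
  show "1 \<le> GG a k t / a" if "1 \<le> t" for t
    using GG_lower[OF that] that a0 by (simp add: le_divide_eq) (smt (verit) mult_le_cancel_left1)
  show "1 \<le> U y \<and> GG a k (U y) / a = y" if "1 \<le> y" for y
    using U_props[OF that] a0 by auto
qed

lemma U_smooth: "smooth_on {1..} U"
proof -
  define G where "G t = GG a k t / a" for t
  have "smooth_on {1..} (\<lambda>t. GG a k t * (1 / a))" by (intro smooth_mult GG_smooth smooth_const)
  then have sG: "smooth_on {1..} G" by (rule smooth_on_cong) (simp add: G_def)
  obtain G' where G': "\<forall>t\<in>{1..}. (G has_real_derivative G' t) (at t within {1..})" "smooth_on {1..} G'"
    using smooth_onD[OF sG] by blast
  have nz: "G' t \<noteq> 0" if t: "t \<in> {1..}" for t
  proof -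
    have da: "((\<lambda>t. a * t) has_real_derivative a) (at t within {1..})"
      by (auto intro!: derivative_eq_intros)
    have dr: "((\<lambda>t. 1 / (a * t)) has_real_derivative (0 * (a * t) - 1 * a) / (a * t * (a * t))) (at t within {1..})"
      by (rule DERIV_divide[OF DERIV_const da]) (use t a0 in auto)
    have d: "((\<lambda>t. G t + 1 / (a * t)) has_real_derivative G' t + (0 * (a * t) - 1 * a) / (a * t * (a * t))) (at t within {1..})"
      using G'(1) t dr by (intro DERIV_add) auto
    have "0 \<le> G' t + (0 * (a * t) - 1 * a) / (a * t * (a * t))"
    proof (rule mono_deriv_nonneg[OF d])
      show "1 \<le> t" using t by auto
      fix x y :: real assume xy: "1 \<le> x" "x \<le> y"
      have e: "G s + 1 / (a * s) = ((1 - a) * s + HH a k s) / a" if "1 \<le> s" for s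
        using a0 that by (simp add: G_def GG_HH field_simps)
      have "(1 - a) * x + HH a k x \<le> (1 - a) * y + HH a k y"
        using HH_mono[OF xy] xy a1 by (smt (verit) mult_left_mono)
      then show "G x + 1 / (a * x) \<le> G y + 1 / (a * y)"
        using e[OF xy(1)] e[of y] xy a0 by (simp add: divide_right_mono)
    qed
    moreover have "(0 * (a * t) - 1 * a) / (a * t * (a * t)) < 0" using t a0 by (simp add: divide_neg_pos)
    ultimately show ?thesis by linarith
  qed
  show ?thesis
  proof (rule smooth_inverse[where G=G and G'=G' and T="{1..}"])
    show "smooth_on {1..} G'" by (rule G'(2))
    show "(G has_real_derivative G' t) (at t within {1..})" if "t \<in> {1..}" for t using G'(1) that by auto
    show "G' t \<noteq> 0" if "t \<in> {1..}" for t using nz that .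
    show "U z \<in> {1..}" if "z \<in> {1..}" for z using U_props that by auto
    show "G (U z) = z" if "z \<in> {1..}" for z using U_props that a0 by (auto simp: G_def)
    show "continuous_on {1..} U" by (rule U_cont)
  qed
qed

lemma Inv_Suc: "Inv a (Suc k)"
  unfolding Inv_def
proof (intro conjI allI impI)
  fix x :: real assume x: "1 \<le> x"
  show "0 < fseq a (Suc k) x" "fseq a (Suc k) x \<le> 1" using fSuc_U[OF x] U_props[OF x] by auto
next
  show "fseq a (Suc k) 1 = 1" using fSuc_U[of 1] U_1 by simp
next
  fix x :: real assume x: "1 < x"
  show "1 / x < fseq a (Suc k) x" using fSuc_U[of x] U_lt[OF x] U_props[of x] x
    by (simp add: frac_less2)
next
  have "smooth_on {1..} (\<lambda>x. 1 / U x)" by (rule smooth_recip[OF U_smooth]) (use U_props in force)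
  then show "smooth_on {1..} (fseq a (Suc k))" by (rule smooth_on_cong) (metis atLeast_iff fSuc_U)
next
  fix x y :: real assume xy: "1 \<le> x" "x \<le> y"
  have "U x \<le> U y" using U_strict[of x y] xy by (cases "x = y") auto
  then show "HH a (Suc k) x \<le> HH a (Suc k) y"
    using HH_Suc[of x] HH_Suc[of y] xy HH_mono U_props[of x] by auto
qed

end




context
  fixes a :: real
  assumes a0: "0 < a" and a1: "a \<le> 1"
begin

lemma Inv_all: "Inv a k"
  by (induction k) (use a0 a1 Inv_0 Inv_Suc in auto)

lemma f_dec: "1 < x \<Longrightarrow> fseq a (Suc k) x < fseq a k x"
proof (induction k arbitrary: x)
  case 0
  have "1 < U a 0 x" using U_gt1[OF a0 a1 Inv_all[of 0]] 0 by blast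
  then show ?case using fSuc_U[OF a0 a1 Inv_all[of 0], of x] 0 by simp
next
  case (Suc k)
  have I1: "Inv a k" "Inv a (Suc k)" by (rule Inv_all)+
  have GGlt: "GG a (Suc k) t < GG a k t" if t: "1 < t" for t
    using gg_strict[OF a1 _ Suc.IH[OF t]] f_pos[OF a0 a1 I1(2), of t] t by (simp add: GG_def)
  define u where "u = U a k x"
  define v where "v = U a (Suc k) x"
  have u: "1 < u" "GG a k u = a * x" using U_gt1[OF a0 a1 I1(1) Suc.prems] U_props[OF a0 a1 I1(1), of x] Suc.prems
    by (auto simp: u_def)
  have v: "1 \<le> v" "GG a (Suc k) v = a * x" using U_props[OF a0 a1 I1(2), of x] Suc.prems
    by (auto simp: v_def)
  have "GG a (Suc k) u < GG a (Suc k) v" using GGlt[OF u(1)] u v by simp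
  then have "u < v" using GG_le_iff[OF a0 a1 I1(2), of v u] u v by auto
  then show ?case using fSuc_U[OF a0 a1 I1(1), of x] fSuc_U[OF a0 a1 I1(2), of x] Suc.prems u
    by (simp add: u_def v_def frac_less2)
qed

lemma part_a: "1 \<le> k \<Longrightarrow> (\<forall>x\<ge>1. \<forall>y\<ge>1. x < y \<longrightarrow> fseq a k y < fseq a k x)
        \<and> smooth_on {1..} (fseq a k)
        \<and> fseq a k 1 = 1
        \<and> (fseq a k \<longlongrightarrow> 0) at_top
        \<and> (\<forall>x>1. fseq a k x > 1 / x)"
proof -
  assume "1 \<le> k"
  then obtain j where k: "k = Suc j" by (cases k) auto
  have Ij: "Inv a j" and Ik: "Inv a k" by (rule Inv_all)+
  have dec: "fseq a k y < fseq a k x" if "1 \<le> x" "x < y" for x y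
    using U_strict[OF a0 a1 Ij that] fSuc_U[OF a0 a1 Ij, of x] fSuc_U[OF a0 a1 Ij, of y]
      U_props[OF a0 a1 Ij, of x] that by (simp add: k frac_less2)
  have lb: "- a + a * x \<le> U a j x" if "1 \<le> x" for x
    using U_props[OF a0 a1 Ij that] GG_upper[OF a0 a1 Ij, of "U a j x"] by auto
  have "filterlim (\<lambda>x. a * x) at_top at_top"
    by (rule filterlim_tendsto_pos_mult_at_top[OF tendsto_const a0 filterlim_ident])
  then have "filterlim (\<lambda>x. - a + a * x) at_top at_top"
    using filterlim_tendsto_add_at_top[OF tendsto_const[of "-a"]] by blast
  then have "filterlim (U a j) at_top at_top"
    by (rule filterlim_at_top_mono) (use lb in \<open>auto intro: eventually_mono[OF eventually_ge_at_top[of 1]]\<close>)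
  then have lim: "((\<lambda>x. inverse (U a j x)) \<longlongrightarrow> 0) at_top" by (rule tendsto_inverse_0_at_top)
  have "eventually (\<lambda>x. inverse (U a j x) = fseq a k x) at_top"
    by (rule eventually_mono[OF eventually_ge_at_top[of 1]]) (simp only: k fSuc_U[OF a0 a1 Ij] inverse_eq_divide)
  then have "(fseq a k \<longlongrightarrow> 0) at_top" using lim by (rule Lim_transform_eventually[rotated]) 
  then show ?thesis using dec Ik by (auto simp: Inv_def)
qed

lemma part_b: "(\<forall>x\<in>{0<..1}. \<forall>y\<in>{0<..1}. x < y \<longrightarrow> Fseq a k y < Fseq a k x)
        \<and> smooth_on {0<..1} (Fseq a k)
        \<and> filterlim (Fseq a k) at_top (at_right 0)
        \<and> Fseq a k 1 = a"
proof (intro conjI ballI impI)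
  have Ik: "Inv a k" by (rule Inv_all)
  fix x y :: real assume "x \<in> {0<..1}" "y \<in> {0<..1}" "x < y"
  then show "Fseq a k y < Fseq a k x"
    using GG_strict[OF a0 a1 Ik, of "1/y" "1/x"] by (simp add: Fseq_GG frac_less2)
next
  have Ik: "Inv a k" by (rule Inv_all)
  have "smooth_on {0<..1} (\<lambda>y. 1 / y)" by (rule smooth_recip[OF smooth_id]) auto
  then have "smooth_on {0<..1} (\<lambda>y. GG a k (1 / y))"
    by (rule smooth_comp[where T="{1..}"]) (auto simp: GG_smooth[OF a0 a1 Ik])
  then show "smooth_on {0<..1} (Fseq a k)" by (rule smooth_on_cong) (simp add: Fseq_GG)
next
  have Ik: "Inv a k" by (rule Inv_all)
  have "filterlim (\<lambda>y. a * inverse y) at_top (at_right 0)"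
    by (rule filterlim_tendsto_pos_mult_at_top[OF tendsto_const a0 filterlim_inverse_at_top_right])
  moreover have "eventually (\<lambda>y. a * inverse y \<le> Fseq a k y) (at_right 0)"
  proof (rule eventually_at_rightI[of 0 1])
    fix y :: real assume y: "y \<in> {0<..<1}"
    have "1 \<le> 1 / y" using y by simp
    then show "a * inverse y \<le> Fseq a k y"
      using GG_lower[OF a0 a1 Ik, of "1/y"] by (simp add: Fseq_GG divide_inverse)
  qed simp
  ultimately show "filterlim (Fseq a k) at_top (at_right 0)" by (rule filterlim_at_top_mono)
next
  show "Fseq a k 1 = a" using GG_1[OF a0 a1 Inv_all] by (simp add: Fseq_GG)
qed

end




declare fseq.simps(2)[simp del]

lemma quad_lower:
  fixes L b c :: real
  assumes L: "0 < L" and c: "0 \<le> c" and h: "b \<le> L - c / L"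
  shows "(b + sqrt (b\<^sup>2 + 4 * c)) / 2 \<le> L"
proof -
  have q: "0 \<le> L * L - b * L - c" using h L by (simp add: field_simps)
  have "0 \<le> L * (L - b)" using q c by (simp add: algebra_simps)
  then have "b \<le> L" using L by (simp add: zero_le_mult_iff)
  then have p: "0 \<le> 2 * L - b" using L by simp
  have "b\<^sup>2 + 4 * c \<le> (2 * L - b)\<^sup>2" using q by (simp add: power2_eq_square algebra_simps)
  then have "sqrt (b\<^sup>2 + 4 * c) \<le> sqrt ((2 * L - b)\<^sup>2)" by (rule real_sqrt_le_mono)
  then have "sqrt (b\<^sup>2 + 4 * c) \<le> 2 * L - b" using p by simp
  then show ?thesis by simp
qed

lemma quad_eq:
  fixes L b c :: real
  assumes L: "0 < L" and c: "0 \<le> c" and h: "b = L - c / L"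
  shows "(b + sqrt (b\<^sup>2 + 4 * c)) / 2 = L"
proof -
  have q: "0 = L * L - b * L - c" using h L by (simp add: field_simps)
  have "0 \<le> L * (L - b)" using q c by (simp add: algebra_simps)
  then have "b \<le> L" using L by (simp add: zero_le_mult_iff)
  then have p: "0 \<le> 2 * L - b" using L by simp
  have "b\<^sup>2 + 4 * c = (2 * L - b)\<^sup>2" using q by (simp add: power2_eq_square algebra_simps)
  then have "sqrt (b\<^sup>2 + 4 * c) = 2 * L - b" using p by simp
  then show ?thesis by simp
qed

lemma r_convex:
  fixes a q x :: real
  assumes "1 \<le> q" "q \<le> x"
  shows "(2 * a - 1) * q + 1 / q \<le> max (2 * a) ((2 * a - 1) * x + 1 / x)"
proof (cases "2 * a - 1 \<le> 1 / q")
  case True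
  have "(2 * a - 1) * q + 1 / q - 2 * a = (q - 1) * ((2 * a - 1) - 1 / q)"
    using assms by (simp add: field_simps)
  moreover have "(q - 1) * ((2 * a - 1) - 1 / q) \<le> 0"
    using True assms by (simp add: mult_nonneg_nonpos)
  ultimately show ?thesis by linarith
next
  case False
  have qx: "1 / (q * x) \<le> 1 / q" using assms by (simp add: frac_le)
  have "(2 * a - 1) * x + 1 / x - ((2 * a - 1) * q + 1 / q) = (x - q) * ((2 * a - 1) - 1 / (q * x))"
    using assms by (simp add: field_simps)
  moreover have "0 \<le> (x - q) * ((2 * a - 1) - 1 / (q * x))"
    using False assms qx by (intro mult_nonneg_nonneg) auto
  ultimately show ?thesis by linarith
qed

context
  fixes a :: real
  assumes a0: "0 < a" and a1: "a \<le> 1"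
begin

definition LL :: "real \<Rightarrow> real" where "LL y = lim (\<lambda>k. fseq a k y)"

lemma Lconv: "1 \<le> y \<Longrightarrow> (\<lambda>k. fseq a k y) \<longlonglongrightarrow> LL y \<and> (\<forall>k. LL y \<le> fseq a k y) \<and> 1 / y \<le> LL y \<and> LL y \<le> 1"
proof -
  assume y: "1 \<le> y"
  have dec: "decseq (\<lambda>k. fseq a k y)"
  proof (rule decseq_SucI)
    fix k show "fseq a (Suc k) y \<le> fseq a k y"
    proof (cases "y = 1")
      case True then show ?thesis using f_1[OF a0 a1 Inv_all[OF a0 a1]] by simp
    next
      case False then show ?thesis using f_dec[OF a0 a1, of y k] y by simp
    qed
  qed
  have lb: "\<forall>k. 1 / y \<le> fseq a k y" using f_ge[OF a0 a1 Inv_all[OF a0 a1]] y by blast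
  obtain L where L: "(\<lambda>k. fseq a k y) \<longlonglongrightarrow> L" "\<forall>i. L \<le> fseq a i y"
    using decseq_convergent[OF dec lb] by blast
  have "LL y = L" unfolding LL_def using L(1) by (rule limI)
  moreover have "1 / y \<le> L" using L(1) lb by (intro LIMSEQ_le_const) auto
  moreover have "L \<le> 1" using L(2) f_le1[OF a0 a1 Inv_all[OF a0 a1], of y] y by (metis order_trans)
  ultimately show ?thesis using L by auto
qed

definition psi :: "real \<Rightarrow> real" where "psi y = a * y + gg a (LL y)"

lemma L_pos: "1 \<le> y \<Longrightarrow> 0 < LL y"
  using Lconv[of y] by (smt (verit) divide_pos_pos)

lemma HH_conv: "1 \<le> y \<Longrightarrow> (\<lambda>k. HH a k y) \<longlonglongrightarrow> psi y"
proof -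
  assume y: "1 \<le> y"
  have "(\<lambda>k. a * y + (fseq a k y - (1 - a) / fseq a k y)) \<longlonglongrightarrow> a * y + (LL y - (1 - a) / LL y)"
    using Lconv[OF y] L_pos[OF y] by (intro tendsto_intros) auto
  then show ?thesis by (simp add: HH_def psi_def gg_def)
qed

lemma psi_mono: "1 \<le> y \<Longrightarrow> y \<le> z \<Longrightarrow> psi y \<le> psi z"
  by (rule LIMSEQ_le[OF HH_conv HH_conv]) (use HH_mono[OF a0 a1 Inv_all[OF a0 a1]] in auto)

lemma psi_lower: "1 \<le> y \<Longrightarrow> 2 * a \<le> psi y \<and> (2 * a - 1) * y + 1 / y \<le> psi y"
proof -
  assume y: "1 \<le> y"
  have "2 * a \<le> HH a k y" for k
    using HH_mono[OF a0 a1 Inv_all[OF a0 a1], of 1 y k] y f_1[OF a0 a1 Inv_all[OF a0 a1], of k]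
    by (simp add: HH_def gg_1)
  then have 1: "2 * a \<le> psi y" by (intro LIMSEQ_le_const[OF HH_conv[OF y]]) auto
  have "(2 * a - 1) * y + 1 / y \<le> HH a k y" for k
  proof -
    have "gg a (1 / y) \<le> gg a (fseq a k y)"
      using gg_mono[OF a1, of "1/y"] f_ge[OF a0 a1 Inv_all[OF a0 a1], of y k] y by auto
    then show ?thesis using y by (simp add: HH_def gg_def algebra_simps)
  qed
  then have 2: "(2 * a - 1) * y + 1 / y \<le> psi y" by (intro LIMSEQ_le_const[OF HH_conv[OF y]]) auto
  from 1 2 show ?thesis by blast
qed

lemma psi_fix: "1 \<le> y \<Longrightarrow> psi (1 / LL y) = psi y \<and> 1 \<le> 1 / LL y \<and> 1 / LL y \<le> y"
proof -
  assume y: "1 \<le> y"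
  have Lp: "0 < LL y" using L_pos[OF y] .
  have phi1: "1 \<le> 1 / LL y" using Lconv[OF y] Lp by simp
  have phiy: "1 / LL y \<le> y" using Lconv[OF y] Lp y by (simp add: divide_le_eq mult.commute)
  have le1: "psi y \<le> psi (1 / LL y)"
  proof (rule LIMSEQ_le)
    show "(\<lambda>k. HH a (Suc k) y) \<longlonglongrightarrow> psi y" using HH_conv[OF y] by (rule LIMSEQ_Suc)
    show "(\<lambda>k. HH a k (1 / LL y)) \<longlonglongrightarrow> psi (1 / LL y)" using HH_conv[OF phi1] .
    show "\<exists>N. \<forall>n\<ge>N. HH a (Suc n) y \<le> HH a n (1 / LL y)"
    proof (intro exI allI impI)
      fix n :: nat
      have In: "Inv a n" by (rule Inv_all[OF a0 a1])
      have "U a n y = 1 / fseq a (Suc n) y" using U_def[OF a0 a1 In] by simp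
      moreover have "LL y \<le> fseq a (Suc n) y" using Lconv[OF y] by blast
      ultimately have "U a n y \<le> 1 / LL y" using Lp by (simp add: frac_le)
      then show "HH a (Suc n) y \<le> HH a n (1 / LL y)"
        using HH_Suc[OF a0 a1 In y] HH_mono[OF a0 a1 In, of "U a n y" "1 / LL y"] U_props[OF a0 a1 In y] by simp
    qed
  qed
  have "psi (1 / LL y) \<le> psi y" using psi_mono[OF phi1 phiy] .
  with le1 phi1 phiy show ?thesis by simp
qed

lemma psi_upper: "1 \<le> x \<Longrightarrow> psi x \<le> max (2 * a) ((2 * a - 1) * x + 1 / x)"
proof -
  assume x: "1 \<le> x"
  define \<Lambda> where "\<Lambda> = {y. 1 \<le> y \<and> psi y = psi x}"
  define q where "q = Inf \<Lambda>"
  have xL: "x \<in> \<Lambda>" using x by (simp add: \<Lambda>_def)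
  have bdd: "bdd_below \<Lambda>" unfolding \<Lambda>_def by (rule bdd_belowI[of _ 1]) auto
  have q1: "1 \<le> q" unfolding q_def using xL by (intro cInf_greatest) (auto simp: \<Lambda>_def)
  have qx: "q \<le> x" unfolding q_def by (rule cInf_lower[OF xL bdd])
  have "psi x \<le> (2 * a - 1) * q + 1 / q + e" if e: "0 < e" for e
  proof -
    have "q < q + e / a" using e a0 by simp
    then obtain y where y: "y \<in> \<Lambda>" "y < q + e / a"
      using cInf_less_iff[of \<Lambda> "q + e / a"] xL bdd unfolding q_def by blast
    have y1: "1 \<le> y" and psiy: "psi y = psi x" using y by (auto simp: \<Lambda>_def)
    have "1 / LL y \<in> \<Lambda>" using psi_fix[OF y1] psiy by (simp add: \<Lambda>_def)
    then have qp: "q \<le> 1 / LL y" unfolding q_def using bdd by (rule cInf_lower)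
    have Lp: "0 < LL y" using L_pos[OF y1] .
    define p where "p = 1 / LL y"
    have pq: "q \<le> p" using qp by (simp add: p_def)
    have "gg a (LL y) = 1 / p - (1 - a) * p" using Lp by (simp add: p_def gg_def)
    then have "psi x = a * y + 1 / p - (1 - a) * p" using psiy by (simp add: psi_def)
    also have "\<dots> \<le> a * y + 1 / q - (1 - a) * q"
    proof -
      have "1 / p \<le> 1 / q" using pq q1 by (simp add: frac_le)
      moreover have "(1 - a) * q \<le> (1 - a) * p" using pq a1 by (simp add: mult_left_mono)
      ultimately show ?thesis by linarith
    qed
    also have "\<dots> \<le> a * (q + e / a) + 1 / q - (1 - a) * q"
      using y(2) a0 by (simp add: mult_left_mono)
    also have "\<dots> = (2 * a - 1) * q + 1 / q + e" using a0 by (simp add: field_simps)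
    finally show ?thesis .
  qed
  then have "psi x \<le> (2 * a - 1) * q + 1 / q" by (rule field_le_epsilon)
  also have "\<dots> \<le> max (2 * a) ((2 * a - 1) * x + 1 / x)" by (rule r_convex[OF q1 qx])
  finally show ?thesis .
qed

lemma part_d: "1 \<le> x \<Longrightarrow> (\<lambda>k. fseq a k x) \<longlonglongrightarrow> finf a x"
proof -
  assume x: "1 \<le> x"
  have psi_eq: "psi x = max (2 * a) ((2 * a - 1) * x + 1 / x)"
    using psi_upper[OF x] psi_lower[OF x] by linarith
  define L where "L = LL x"
  have Lp: "0 < L" and Lx: "1 / x \<le> L" using L_pos[OF x] Lconv[OF x] by (auto simp: L_def)
  have ggL: "gg a L = max (2 * a - a * x) ((2 * a - 1) * x + 1 / x - a * x)"
    using psi_eq by (simp add: psi_def L_def)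
  define b where "b = a * (2 - x)"
  have fin: "finf a x = max (1 / x) ((b + sqrt (b\<^sup>2 + 4 * (1 - a))) / 2)"
    by (simp add: finf_def b_def power_mult_distrib)
  have hle: "(b + sqrt (b\<^sup>2 + 4 * (1 - a))) / 2 \<le> L"
    by (rule quad_lower[OF Lp]) (use a1 ggL in \<open>auto simp: b_def gg_def algebra_simps\<close>)
  show ?thesis
  proof (cases "(2 * a - 1) * x + 1 / x \<le> 2 * a")
    case True
    then have "gg a L = b" using ggL by (simp add: b_def algebra_simps)
    then have "(b + sqrt (b\<^sup>2 + 4 * (1 - a))) / 2 = L"
      by (intro quad_eq[OF Lp]) (use a1 in \<open>auto simp: gg_def\<close>)
    then have "finf a x = L" using fin Lx by simp
    then show ?thesis using Lconv[OF x] by (simp add: L_def)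
  next
    case False
    then have "gg a L = gg a (1 / x)" using ggL x by (simp add: gg_def algebra_simps)
    then have "L = 1 / x"
      using gg_strict[OF a1, of L "1/x"] gg_strict[OF a1, of "1/x" L] Lp x
      by (cases L "1 / x" rule: linorder_cases) auto
    then have "finf a x = L" using fin hle by simp
    then show ?thesis using Lconv[OF x] by (simp add: L_def)
  qed
qed

end


theorem proposition1:
  fixes a :: real
  assumes "0 < a" and "a \<le> 1"
  shows
    \<comment> \<open>well-definedness: the maximum defining f_{k+1} x exists\<close>
    "(\<forall>k. \<forall>x\<ge>1. \<exists>y. (0 < y \<and> y \<le> 1 \<and> Fseq a k y = a * x) \<and>
        (\<forall>z. 0 < z \<and> z \<le> 1 \<and> Fseq a k z = a * x \<longrightarrow> z \<le> y))
   \<and> \<comment> \<open>(a)\<close>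
    (\<forall>k\<ge>1. (\<forall>x\<ge>1. \<forall>y\<ge>1. x < y \<longrightarrow> fseq a k y < fseq a k x)
        \<and> smooth_on {1..} (fseq a k)
        \<and> fseq a k 1 = 1
        \<and> (fseq a k \<longlongrightarrow> 0) at_top
        \<and> (\<forall>x>1. fseq a k x > 1 / x))
   \<and> \<comment> \<open>(b)\<close>
    (\<forall>k. (\<forall>x\<in>{0<..1}. \<forall>y\<in>{0<..1}. x < y \<longrightarrow> Fseq a k y < Fseq a k x)
        \<and> smooth_on {0<..1} (Fseq a k)
        \<and> filterlim (Fseq a k) at_top (at_right 0)
        \<and> Fseq a k 1 = a)
   \<and> \<comment> \<open>(c)\<close>
    (\<forall>k. \<forall>x>1. fseq a (Suc k) x < fseq a k x)
   \<and> \<comment> \<open>(d)\<close>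
    (\<forall>x\<ge>1. (\<lambda>k. fseq a k x) \<longlonglongrightarrow> finf a x)"
  proof -
  have W: "\<forall>k. \<forall>x\<ge>1. \<exists>y. (0 < y \<and> y \<le> 1 \<and> Fseq a k y = a * x) \<and>
        (\<forall>z. 0 < z \<and> z \<le> 1 \<and> Fseq a k z = a * x \<longrightarrow> z \<le> y)"
    using welldef[OF assms Inv_all[OF assms]] by blast
  have A: "\<forall>k\<ge>1. (\<forall>x\<ge>1. \<forall>y\<ge>1. x < y \<longrightarrow> fseq a k y < fseq a k x)
        \<and> smooth_on {1..} (fseq a k)
        \<and> fseq a k 1 = 1
        \<and> (fseq a k \<longlongrightarrow> 0) at_top
        \<and> (\<forall>x>1. fseq a k x > 1 / x)"
    using part_a[OF assms] by blast
  have B: "\<forall>k. (\<forall>x\<in>{0<..1}. \<forall>y\<in>{0<..1}. x < y \<longrightarrow> Fseq a k y < Fseq a k x)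
        \<and> smooth_on {0<..1} (Fseq a k)
        \<and> filterlim (Fseq a k) at_top (at_right 0)
        \<and> Fseq a k 1 = a"
    using part_b[OF assms] by blast
  have C: "\<forall>k. \<forall>x>1. fseq a (Suc k) x < fseq a k x" using f_dec[OF assms] by blast
  have D: "\<forall>x\<ge>1. (\<lambda>k. fseq a k x) \<longlonglongrightarrow> finf a x" using part_d[OF assms] by blast
  show ?thesis using W A B C D by (intro conjI)
qed

end
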